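(* Let $(W,S)$ be a hyperbolic reflection group in $\mathbb{H}^n$ with a convex polytope $P$ as fundamental domain, and let $R$ be its set of reflections. Let $\mathcal{I}_p(W)$ be the set of $\xi\in\partial\mathbb{H}^n$ such that there exist $r_1,r_2\in R$ with $H_{r_1},H_{r_2}$ parallel and $\xi\in\partial H_{r_1}\cap\partial H_{r_2}$, and let $\mathcal{P}_{up}(W)$ be the set of $\mu\in\partial\mathbb{H}^n$ such that $\mu$ is an endpoint of the common perpendicular of two ultra-parallel hyperplanes $H_{r_3},H_{r_4}$ with $r_3,r_4\in R$. Then $\mathcal{I}_p(W)\cup\mathcal{P}_{up}(W)$ is dense in $\partial\mathbb{H}^n$.
   Context: $(W,S)$ is a discrete group generated by the set $S$ of reflections across the walls of a Coxeter polyhedron $P$ (a convex polyhedron whose intersecting bounding hyperplanes meet at dihedral angles that are submultiples of $\pi$), with $P$ a strict fundamental domain, and whose Coxeter system does not split as a direct product of spherical and affine reflection groups. A convex polytope (possibly with ideal vertices) is, in the hyperboloid model, the intersection of $\mathbb{H}^n$ with a convex polyhedral cone contained in $\{v\mid\langle v|v\rangle\le0,\ v_{n+1}>0\}$. $R=\{wsw^{-1}\mid w\in W,s\in S\}$, $H_r$ is the hyperplane fixed by $r$, and $\partial H$ is the set of ideal points of $H$. Distinct hyperplanes are parallel if disjoint in $\mathbb{H}^n$, and ultra-parallel if moreover they have no common ideal point; ultra-parallel hyperplanes have a unique common perpendicular (geodesic line orthogonal to both). $\partial\mathbb{H}^n$ carries the cone topology. *)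

theory Defs
  imports "HOL-Analysis.Analysis"
begin

text \<open>Minkowski space R^{n+1} is modelled as (real^'n) \<times> real; the last (time)
 coordinate is the second component. Hyperbolic space H^n is the upper sheet of the
 hyperboloid; n = CARD('n).\<close>

type_synonym 'n mvec = "(real ^ 'n) \<times> real"

definition lor :: "'n::finite mvec \<Rightarrow> 'n mvec \<Rightarrow> real" where
  "lor v w = fst v \<bullet> fst w - snd v * snd w"

definition Hn :: "'n::finite mvec set" where
  "Hn = {v. lor v v = -1 \<and> snd v > 0}"

text \<open>Ideal boundary: future light-like rays, each normalised to last coordinate 1
 (a copy of the unit sphere; its Euclidean topology is the cone topology).\<close>
definition bdry :: "'n::finite mvec set" where
  "bdry = {v. fst v \<bullet> fst v = 1 \<and> snd v = 1}"

definition ideal_of :: "'n::finite mvec \<Rightarrow> 'n mvec" where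
  "ideal_of w = (1 / snd w) *\<^sub>R w"

definition polycone :: "'n::finite mvec set \<Rightarrow> 'n mvec set" where
  "polycone E = {v. \<forall>e\<in>E. lor v e \<le> 0}"

definition polytope :: "'n::finite mvec set \<Rightarrow> 'n mvec set" where
  "polytope E = Hn \<inter> polycone E"

definition hrefl :: "'n::finite mvec \<Rightarrow> 'n mvec \<Rightarrow> 'n mvec" where
  "hrefl e v = v - (2 * lor v e) *\<^sub>R e"

text \<open>Group generated by a set S of involutions (as maps).\<close>
inductive_set gen_group :: "('a \<Rightarrow> 'a) set \<Rightarrow> ('a \<Rightarrow> 'a) set" for S where
  gen_id: "id \<in> gen_group S"
| gen_step: "s \<in> S \<Longrightarrow> g \<in> gen_group S \<Longrightarrow> s \<circ> g \<in> gen_group S"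

definition reflections_of :: "('a \<Rightarrow> 'a) set \<Rightarrow> ('a \<Rightarrow> 'a) set \<Rightarrow> ('a \<Rightarrow> 'a) set" where
  "reflections_of W S = {w \<circ> s \<circ> inv w | w s. w \<in> W \<and> s \<in> S}"

definition hplane :: "('n::finite mvec \<Rightarrow> 'n mvec) \<Rightarrow> 'n mvec set" where
  "hplane r = {x \<in> Hn. r x = x}"

definition ideal_pts :: "('n::finite mvec \<Rightarrow> 'n mvec) \<Rightarrow> 'n mvec set" where
  "ideal_pts r = {\<xi> \<in> bdry. r \<xi> = \<xi>}"

definition hparallel :: "('n::finite mvec \<Rightarrow> 'n mvec) \<Rightarrow> ('n mvec \<Rightarrow> 'n mvec) \<Rightarrow> bool" where
  "hparallel r1 r2 \<longleftrightarrow> hplane r1 \<noteq> hplane r2 \<and> hplane r1 \<inter> hplane r2 = {}"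

definition ultra_parallel :: "('n::finite mvec \<Rightarrow> 'n mvec) \<Rightarrow> ('n mvec \<Rightarrow> 'n mvec) \<Rightarrow> bool" where
  "ultra_parallel r1 r2 \<longleftrightarrow> hparallel r1 r2 \<and> ideal_pts r1 \<inter> ideal_pts r2 = {}"

definition unit_tangent :: "'n::finite mvec \<Rightarrow> 'n mvec \<Rightarrow> bool" where
  "unit_tangent x v \<longleftrightarrow> x \<in> Hn \<and> lor x v = 0 \<and> lor v v = 1"

definition geod :: "'n::finite mvec \<Rightarrow> 'n mvec \<Rightarrow> 'n mvec set" where
  "geod x v = range (\<lambda>t. cosh t *\<^sub>R x + sinh t *\<^sub>R v)"

definition geod_ends :: "'n::finite mvec \<Rightarrow> 'n mvec \<Rightarrow> 'n mvec set" where
  "geod_ends x v = {ideal_of (x + v), ideal_of (x - v)}"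

definition perp_to :: "'n::finite mvec set \<Rightarrow> ('n mvec \<Rightarrow> 'n mvec) \<Rightarrow> bool" where
  "perp_to L r \<longleftrightarrow> (\<exists>y v. unit_tangent y v \<and> y \<in> hplane r \<and> L = geod y v \<and>
      (\<forall>u. lor u y = 0 \<and> r u = u \<longrightarrow> lor v u = 0))"

definition Ip :: "('n::finite mvec \<Rightarrow> 'n mvec) set \<Rightarrow> 'n mvec set" where
  "Ip R = {\<xi> \<in> bdry. \<exists>r1\<in>R. \<exists>r2\<in>R. hparallel r1 r2 \<and> \<xi> \<in> ideal_pts r1 \<and> \<xi> \<in> ideal_pts r2}"

definition Pup :: "('n::finite mvec \<Rightarrow> 'n mvec) set \<Rightarrow> 'n mvec set" where
  "Pup R = {\<mu> \<in> bdry. \<exists>r3\<in>R. \<exists>r4\<in>R. ultra_parallel r3 r4 \<and>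
      (\<exists>x v. unit_tangent x v \<and> perp_to (geod x v) r3 \<and> perp_to (geod x v) r4 \<and>
             \<mu> \<in> geod_ends x v)}"

text \<open>E is the set of outward unit normals of the facets of a finite-volume convex
 Coxeter polytope in H^n.\<close>
definition coxeter_polytope :: "'n::finite mvec set \<Rightarrow> bool" where
  "coxeter_polytope E \<longleftrightarrow> finite E \<and> E \<noteq> {} \<and>
     (\<forall>e\<in>E. lor e e = 1) \<and>
     (\<forall>e\<in>E. \<exists>x\<in>polytope E. lor x e = 0 \<and> (\<forall>f\<in>E - {e}. lor x f < 0)) \<and>
     (\<forall>v\<in>polycone E. v \<noteq> 0 \<longrightarrow> lor v v \<le> 0 \<and> snd v > 0) \<and>
     (\<forall>e\<in>E. \<forall>f\<in>E. e \<noteq> f \<and> hplane (hrefl e) \<inter> hplane (hrefl f) \<noteq> {} \<longrightarrow>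
         (\<exists>m::nat. m \<ge> 2 \<and> lor e f = - cos (pi / real m)))"

definition discrete_action :: "('n::finite mvec \<Rightarrow> 'n mvec) set \<Rightarrow> bool" where
  "discrete_action W \<longleftrightarrow> (\<forall>K. compact K \<and> K \<subseteq> Hn \<longrightarrow> finite {w \<in> W. w ` K \<inter> K \<noteq> {}})"

definition strict_fundamental_domain :: "('n::finite mvec \<Rightarrow> 'n mvec) set \<Rightarrow> 'n mvec set \<Rightarrow> bool" where
  "strict_fundamental_domain W P \<longleftrightarrow> P \<subseteq> Hn \<and>
     (\<forall>x\<in>Hn. \<exists>!p. p \<in> P \<and> (\<exists>w\<in>W. w p = x))"

end

theory Submission
  imports Defs
begin


lemma lor_sym: "lor x y = lor y x"
  unfolding lor_def by (simp add: inner_commute mult.commute)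

lemma lor_add_left[simp]: "lor (x + y) z = lor x z + lor y z"
  and lor_add_right[simp]: "lor z (x + y) = lor z x + lor z y"
  and lor_diff_left[simp]: "lor (x - y) z = lor x z - lor y z"
  and lor_diff_right[simp]: "lor z (x - y) = lor z x - lor z y"
  and lor_scale_left[simp]: "lor (c *\<^sub>R x) z = c * lor x z"
  and lor_scale_right[simp]: "lor z (c *\<^sub>R x) = c * lor z x"
  and lor_neg_left[simp]: "lor (- x) z = - lor x z"
  and lor_neg_right[simp]: "lor z (- x) = - lor z x"
  and lor_zero_left[simp]: "lor 0 z = 0"
  and lor_zero_right[simp]: "lor z 0 = 0"
  unfolding lor_def by (auto simp: inner_add_left inner_add_right inner_diff_left inner_diff_right algebra_simps)

lemma lor_self: "lor x x = norm (fst x) ^ 2 - snd x ^ 2"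
  unfolding lor_def by (simp add: power2_eq_square dot_square_norm)

lemma rev_cs:
  assumes "norm (fst x) \<le> snd x" "norm (fst y) < snd y" "0 < snd x"
  shows "lor x y < 0"
proof -
  have "fst x \<bullet> fst y \<le> norm (fst x) * norm (fst y)" by (rule norm_cauchy_schwarz)
  also have "\<dots> \<le> snd x * norm (fst y)" using assms by (simp add: mult_right_mono)
  also have "\<dots> < snd x * snd y" using assms by simp
  finally show ?thesis unfolding lor_def by simp
qed

lemma causal_iff: "lor x x \<le> 0 \<and> 0 \<le> snd x \<longleftrightarrow> norm (fst x) \<le> snd x"
proof -
  have "lor x x \<le> 0 \<longleftrightarrow> norm (fst x) ^ 2 \<le> snd x ^ 2" by (simp add: lor_self)
  also have "\<dots> \<longleftrightarrow> norm (fst x) \<le> \<bar>snd x\<bar>"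
    using abs_le_square_iff[of "norm (fst x)" "snd x"] by simp
  finally have e: "lor x x \<le> 0 \<longleftrightarrow> norm (fst x) \<le> \<bar>snd x\<bar>" .
  have h: "0 \<le> norm (fst x)" by simp
  show ?thesis using e h by linarith
qed

lemma timelike_iff: "lor x x < 0 \<and> 0 < snd x \<longleftrightarrow> norm (fst x) < snd x"
proof -
  have "lor x x < 0 \<longleftrightarrow> norm (fst x) ^ 2 < snd x ^ 2" by (simp add: lor_self)
  also have "\<dots> \<longleftrightarrow> norm (fst x) < \<bar>snd x\<bar>"
    using abs_le_square_iff[of "snd x" "norm (fst x)"] by auto
  finally have e: "lor x x < 0 \<longleftrightarrow> norm (fst x) < \<bar>snd x\<bar>" .
  have h: "0 \<le> norm (fst x)" by simp
  show ?thesis using e h by linarith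
qed

lemma Hn_norm: "x \<in> Hn \<Longrightarrow> norm (fst x) < snd x"
  unfolding Hn_def using timelike_iff by force

lemma bdry_norm: "x \<in> bdry \<Longrightarrow> norm (fst x) = 1 \<and> snd x = 1"
  unfolding bdry_def by (simp add: norm_eq_sqrt_inner)

lemma bdry_lor: "x \<in> bdry \<Longrightarrow> lor x x = 0"
  unfolding bdry_def lor_def by simp

lemma Hn_bdry_neg: "q \<in> Hn \<Longrightarrow> \<xi> \<in> bdry \<Longrightarrow> lor \<xi> q < 0"
proof -
  assume a: "q \<in> Hn" "\<xi> \<in> bdry"
  have "norm (fst \<xi>) \<le> snd \<xi>" "0 < snd \<xi>" using bdry_norm[OF a(2)] by auto
  then show ?thesis using rev_cs[of \<xi> q] Hn_norm[OF a(1)] by simp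
qed

lemma Hn_Hn_neg: "x \<in> Hn \<Longrightarrow> y \<in> Hn \<Longrightarrow> lor x y < 0"
proof -
  assume a: "x \<in> Hn" "y \<in> Hn"
  have "norm (fst x) < snd x" "norm (fst y) < snd y" using Hn_norm[OF a(1)] Hn_norm[OF a(2)] by auto
  moreover have "0 < snd x" using calculation(1) norm_ge_zero[of "fst x"] by linarith
  ultimately show ?thesis using rev_cs[of x y] by simp
qed

lemma sq_le_abs: "norm (a::real^'n) ^ 2 \<le> (b::real) ^ 2 \<Longrightarrow> norm a \<le> \<bar>b\<bar>"
  using abs_le_square_iff[of "norm a" b] by simp

lemma sq_lt_abs: "norm (a::real^'n) ^ 2 < (b::real) ^ 2 \<Longrightarrow> norm a < \<bar>b\<bar>"
  using abs_le_square_iff[of b "norm a"] by auto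

lemma causal_orth_timelike:
  assumes "lor x x \<le> 0" "x \<noteq> 0" "lor t t < 0"
  shows "lor x t \<noteq> 0"
proof
  assume h: "lor x t = 0"
  have a: "norm (fst x) \<le> \<bar>snd x\<bar>" using assms(1) sq_le_abs[of "fst x" "snd x"] by (simp add: lor_self)
  have b: "norm (fst t) < \<bar>snd t\<bar>" using assms(3) sq_lt_abs[of "fst t" "snd t"] by (simp add: lor_self)
  show False
  proof (cases "snd x = 0")
    case True
    then have "fst x = 0" using a by simp
    then show False using True assms(2) by (simp add: prod_eq_iff)
  next
    case False
    have "\<bar>fst x \<bullet> fst t\<bar> \<le> norm (fst x) * norm (fst t)" by (rule Cauchy_Schwarz_ineq2)
    also have "\<dots> \<le> \<bar>snd x\<bar> * norm (fst t)" using a by (simp add: mult_right_mono)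
    also have "\<dots> < \<bar>snd x\<bar> * \<bar>snd t\<bar>" using b False by simp
    finally have "\<bar>fst x \<bullet> fst t\<bar> < \<bar>snd x * snd t\<bar>" by (simp add: abs_mult)
    moreover have "fst x \<bullet> fst t = snd x * snd t" using h by (simp add: lor_def)
    ultimately show False by simp
  qed
qed

lemma future_of_neg:
  assumes "lor v v < 0" "q \<in> Hn" "lor v q < 0"
  shows "0 < snd v"
proof (rule ccontr)
  assume "\<not> 0 < snd v"
  have n: "norm (fst v) < \<bar>snd v\<bar>" using assms(1) sq_lt_abs[of "fst v" "snd v"] by (simp add: lor_self)
  then have "norm (fst (-v)) < snd (-v)" using \<open>\<not> 0 < snd v\<close> by simp
  moreover have "norm (fst q) < snd q" using Hn_norm[OF assms(2)] .
  moreover have "0 < snd q" using calculation(2) norm_ge_zero[of "fst q"] by linarith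
  ultimately have "lor q (-v) < 0" using rev_cs[of q "-v"] by simp
  then show False using assms(3) lor_sym[of q v] by simp
qed



lemma hrefl_lor: "lor e e = 1 \<Longrightarrow> lor (hrefl e x) (hrefl e y) = lor x y"
  unfolding hrefl_def by (simp add: lor_sym[of e x] lor_sym[of e y] algebra_simps)

lemma hrefl_invol: "lor e e = 1 \<Longrightarrow> hrefl e (hrefl e x) = x"
  unfolding hrefl_def by (simp add: algebra_simps)

lemma hrefl_linear: "linear (hrefl e)"
  unfolding hrefl_def by (rule linearI) (auto simp: algebra_simps)

lemma hrefl_neg: "hrefl (- e) = hrefl e"
  unfolding hrefl_def by auto

lemma hrefl_fix: "e \<noteq> 0 \<Longrightarrow> hrefl e x = x \<longleftrightarrow> lor x e = 0"
  unfolding hrefl_def by auto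

lemma hrefl_self: "lor e e = 1 \<Longrightarrow> hrefl e e = - e"
  unfolding hrefl_def by (simp add: algebra_simps scaleR_2)

lemma unit_nz: "lor e e = 1 \<Longrightarrow> e \<noteq> 0"
  by auto

lemma hrefl_eq:
  assumes "lor a a = 1" "lor b b = 1" "hrefl a = hrefl b"
  shows "b = a \<or> b = - a"
proof -
  have "hrefl b a = - a" using hrefl_self[OF assms(1)] assms(3) by simp
  then have "a - (2 * lor a b) *\<^sub>R b = - a" unfolding hrefl_def .
  then have "2 *\<^sub>R a = 2 *\<^sub>R ((lor a b) *\<^sub>R b)" by (simp add: algebra_simps scaleR_2)
  then have ab: "a = (lor a b) *\<^sub>R b" using scaleR_cancel_left[of "2::real" a "(lor a b) *\<^sub>R b"] by simp
  then have "lor a a = lor ((lor a b) *\<^sub>R b) ((lor a b) *\<^sub>R b)" by simp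
  then have "lor a a = lor a b * lor a b" using assms(2) by simp
  then have "(lor a b)^2 = 1" using assms(1) by (simp add: power2_eq_square)
  then have "lor a b = 1 \<or> lor a b = -1" by (simp add: power2_eq_1_iff)
  then show ?thesis using ab by auto
qed

definition lisom :: "('n::finite mvec \<Rightarrow> 'n mvec) \<Rightarrow> bool" where
  "lisom w \<longleftrightarrow> linear w \<and> (\<forall>x y. lor (w x) (w y) = lor x y)"

locale cox =
  fixes E :: "'n::finite mvec set"
  assumes unitE: "\<And>e. e \<in> E \<Longrightarrow> lor e e = 1"
begin

abbreviation "W \<equiv> gen_group (hrefl ` E)"

lemma W_comp: "g \<in> W \<Longrightarrow> h \<in> W \<Longrightarrow> g \<circ> h \<in> W"
proof (induction g rule: gen_group.induct)
  case gen_id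
  then show ?case by simp
next
  case (gen_step s g)
  then have "s \<circ> (g \<circ> h) \<in> W" using gen_group.gen_step[of s "hrefl ` E" "g \<circ> h"] by blast
  then show ?case by (simp add: o_def)
qed

lemma W_gen: "e \<in> E \<Longrightarrow> hrefl e \<in> W"
  using gen_group.gen_step[OF imageI gen_group.gen_id] by fastforce

lemma W_lisom: "g \<in> W \<Longrightarrow> lisom g"
proof (induction g rule: gen_group.induct)
  case gen_id
  then show ?case by (simp add: lisom_def linear_id[unfolded id_def] id_def)
next
  case (gen_step s g)
  then obtain e where e: "e \<in> E" "s = hrefl e" by auto
  show ?case using gen_step e unitE[OF e(1)] hrefl_linear[of e]
    unfolding lisom_def by (auto intro: linear_compose simp: hrefl_lor)
qed

lemma W_inv_ex: "g \<in> W \<Longrightarrow> \<exists>g'\<in>W. g' \<circ> g = id \<and> g \<circ> g' = id"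
proof (induction g rule: gen_group.induct)
  case gen_id
  show ?case by (intro bexI[of _ id] gen_group.gen_id) auto
next
  case (gen_step s g)
  then obtain e where e: "e \<in> E" "s = hrefl e" by auto
  from gen_step.IH obtain g' where g': "g' \<in> W" "g' \<circ> g = id" "g \<circ> g' = id" by blast
  have ss: "s \<circ> s = id"
  proof (rule ext)
    fix x show "(s \<circ> s) x = id x" using e hrefl_invol[OF unitE[OF e(1)]] by simp
  qed
  have "g' \<circ> s \<in> W" using W_comp[OF g'(1) W_gen[OF e(1)]] e by simp
  moreover have "(g' \<circ> s) \<circ> (s \<circ> g) = id"
    by (metis g'(2) o_assoc ss comp_id)
  moreover have "(s \<circ> g) \<circ> (g' \<circ> s) = id"
    by (metis g'(3) o_assoc ss comp_id)
  ultimately show ?case by blast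
qed

lemma W_inv: assumes "g \<in> W" shows "inv g \<in> W" "g (inv g x) = x" "inv g (g x) = x"
proof -
  obtain g' where g': "g' \<in> W" "g' \<circ> g = id" "g \<circ> g' = id" using W_inv_ex[OF assms] by auto
  have "inv g = g'" using g' by (intro inv_unique_comp)
  moreover have "g (g' x) = x" using fun_cong[OF g'(3), of x] by simp
  moreover have "g' (g x) = x" using fun_cong[OF g'(2), of x] by simp
  ultimately show "inv g \<in> W" "g (inv g x) = x" "inv g (g x) = x" using g'(1) by simp_all
qed

lemma W_linear: "g \<in> W \<Longrightarrow> linear g"
  using W_lisom lisom_def by blast

lemma W_lor: "g \<in> W \<Longrightarrow> lor (g x) (g y) = lor x y"
  using W_lisom lisom_def by blast

lemma W_conj:
  assumes "w \<in> W" "lor e e = 1"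
  shows "w \<circ> hrefl e \<circ> inv w = hrefl (w e)"
proof
  fix v
  have l: "linear w" using W_linear assms by auto
  have "lor (inv w v) e = lor v (w e)"
    using W_lor[OF assms(1), of "inv w v" e] W_inv(2)[OF assms(1)] by simp
  then show "(w \<circ> hrefl e \<circ> inv w) v = hrefl (w e) v"
    unfolding hrefl_def using W_inv(2)[OF assms(1)] by (simp add: linear_diff[OF l] linear_cmul[OF l])
qed

lemma W_refl_in: "w \<in> W \<Longrightarrow> e \<in> E \<Longrightarrow> hrefl (w e) \<in> W"
proof -
  assume a: "w \<in> W" "e \<in> E"
  have "w \<circ> hrefl e \<circ> inv w \<in> W"
    by (intro W_comp W_gen W_inv(1) a)
  then show ?thesis using W_conj[OF a(1) unitE[OF a(2)]] by simp
qed

lemma W_countable: "finite E \<Longrightarrow> countable W"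
proof -
  assume f: "finite E"
  have "W \<subseteq> (\<lambda>l. foldr (\<circ>) l id) ` lists (hrefl ` E)"
  proof
    fix g assume "g \<in> W"
    then show "g \<in> (\<lambda>l. foldr (\<circ>) l id) ` lists (hrefl ` E)"
    proof (induction g rule: gen_group.induct)
      case gen_id
      have "id = foldr (\<circ>) [] id" by simp
      then show ?case by blast
    next
      case (gen_step s g)
      from gen_step.IH obtain l where l: "l \<in> lists (hrefl ` E)" "g = foldr (\<circ>) l id" by blast
      then have "s \<circ> g = foldr (\<circ>) (s # l) id" by simp
      moreover have "s # l \<in> lists (hrefl ` E)" using l(1) gen_step.hyps(1) by simp
      ultimately show ?case by (intro image_eqI[where x="s # l"])
    qed
  qed
  moreover have "countable (lists (hrefl ` E))" using f by (intro countable_lists countable_finite) simp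
  ultimately show ?thesis by (rule countable_subset[OF _ countable_image])
qed

definition walls :: "'n mvec set" where
  "walls = {b. \<exists>w\<in>W. \<exists>e\<in>E. b = w e \<or> b = - (w e)}"

lemma walls_unit: "b \<in> walls \<Longrightarrow> lor b b = 1"
proof -
  assume "b \<in> walls"
  then obtain w e where we: "w \<in> W" "e \<in> E" "b = w e \<or> b = - (w e)" unfolding walls_def by auto
  have "lor (w e) (w e) = 1" using W_lor[OF we(1)] unitE[OF we(2)] by simp
  then show ?thesis using we(3) by auto
qed

lemma walls_refl: "b \<in> walls \<Longrightarrow> hrefl b \<in> W"
proof -
  assume "b \<in> walls"
  then obtain w e where we: "w \<in> W" "e \<in> E" "b = w e \<or> b = - (w e)" unfolding walls_def by auto
  then have "hrefl b = hrefl (w e)" using hrefl_neg[of "w e"] by (cases "b = w e") simp_all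
  then show ?thesis using W_refl_in[OF we(1,2)] by simp
qed

lemma walls_neg: "b \<in> walls \<Longrightarrow> - b \<in> walls"
proof -
  assume "b \<in> walls"
  then obtain w e where we: "w \<in> W" "e \<in> E" "b = w e \<or> b = - (w e)" unfolding walls_def by auto
  then have "- b = w e \<or> - b = - (w e)" by auto
  then show ?thesis unfolding walls_def using we(1,2) by blast
qed

lemma walls_R: "b \<in> walls \<Longrightarrow> hrefl b \<in> reflections_of W (hrefl ` E)"
proof -
  assume "b \<in> walls"
  then obtain w e where we: "w \<in> W" "e \<in> E" "b = w e \<or> b = - (w e)" unfolding walls_def by auto
  then have "hrefl b = hrefl (w e)" using hrefl_neg[of "w e"] by (cases "b = w e") simp_all
  then have "hrefl b = w \<circ> hrefl e \<circ> inv w" using W_conj[OF we(1) unitE[OF we(2)]] by simp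
  then show ?thesis unfolding reflections_of_def using we by blast
qed

end


lemma future_of_neg2:
  assumes "lor v v \<le> 0" "q \<in> Hn" "lor v q < 0"
  shows "0 < snd v"
proof (rule ccontr)
  assume nv: "\<not> 0 < snd v"
  have n: "norm (fst v) \<le> \<bar>snd v\<bar>" using assms(1) sq_le_abs[of "fst v" "snd v"] by (simp add: lor_self)
  have "snd v \<noteq> 0"
  proof
    assume "snd v = 0"
    then have "fst v = 0" using n by simp
    then have "v = 0" using \<open>snd v = 0\<close> by (simp add: prod_eq_iff)
    then show False using assms(3) by simp
  qed
  then have a: "norm (fst (-v)) \<le> snd (-v)" "0 < snd (-v)" using n nv by auto
  have "norm (fst q) < snd q" using Hn_norm[OF assms(2)] .
  then have "lor (-v) q < 0" using rev_cs[of "-v" q] a by simp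
  then show False using assms(3) by simp
qed

lemma hplane_hrefl: "lor a a = 1 \<Longrightarrow> hplane (hrefl a) = {x \<in> Hn. lor x a = 0}"
proof -
  assume "lor a a = 1"
  then have "a \<noteq> 0" by auto
  then show ?thesis unfolding hplane_def by (simp add: hrefl_fix)
qed

lemma ideal_hrefl: "lor a a = 1 \<Longrightarrow> ideal_pts (hrefl a) = {x \<in> bdry. lor x a = 0}"
proof -
  assume "lor a a = 1"
  then have "a \<noteq> 0" by auto
  then show ?thesis unfolding ideal_pts_def by (simp add: hrefl_fix)
qed

lemma geod_shift:
  "geod x v = geod (cosh t0 *\<^sub>R x + sinh t0 *\<^sub>R v) (sinh t0 *\<^sub>R x + cosh t0 *\<^sub>R v)"
proof -
  have e: "cosh t *\<^sub>R (cosh t0 *\<^sub>R x + sinh t0 *\<^sub>R v) + sinh t *\<^sub>R (sinh t0 *\<^sub>R x + cosh t0 *\<^sub>R v)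
      = cosh (t + t0) *\<^sub>R x + sinh (t + t0) *\<^sub>R v" for t
    by (simp add: cosh_add sinh_add algebra_simps)
  show ?thesis unfolding geod_def
  proof (intro set_eqI iffI)
    fix z assume "z \<in> range (\<lambda>t. cosh t *\<^sub>R x + sinh t *\<^sub>R v)"
    then obtain t where "z = cosh t *\<^sub>R x + sinh t *\<^sub>R v" by auto
    then have "z = cosh ((t - t0) + t0) *\<^sub>R x + sinh ((t - t0) + t0) *\<^sub>R v" by simp
    then have "z = (\<lambda>t. cosh t *\<^sub>R (cosh t0 *\<^sub>R x + sinh t0 *\<^sub>R v) + sinh t *\<^sub>R (sinh t0 *\<^sub>R x + cosh t0 *\<^sub>R v)) (t - t0)"
      using e[of "t - t0"] by simp
    then show "z \<in> range (\<lambda>t. cosh t *\<^sub>R (cosh t0 *\<^sub>R x + sinh t0 *\<^sub>R v) + sinh t *\<^sub>R (sinh t0 *\<^sub>R x + cosh t0 *\<^sub>R v))"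
      by blast
  next
    fix z assume "z \<in> range (\<lambda>t. cosh t *\<^sub>R (cosh t0 *\<^sub>R x + sinh t0 *\<^sub>R v) + sinh t *\<^sub>R (sinh t0 *\<^sub>R x + cosh t0 *\<^sub>R v))"
    then obtain t where "z = cosh t *\<^sub>R (cosh t0 *\<^sub>R x + sinh t0 *\<^sub>R v) + sinh t *\<^sub>R (sinh t0 *\<^sub>R x + cosh t0 *\<^sub>R v)" by auto
    then have "z = cosh (t + t0) *\<^sub>R x + sinh (t + t0) *\<^sub>R v" using e[of t] by simp
    then show "z \<in> range (\<lambda>t. cosh t *\<^sub>R x + sinh t *\<^sub>R v)" by blast
  qed
qed

lemma ideal_of_bdry:
  assumes "lor v v = 0" "snd v > 0" shows "ideal_of v \<in> bdry"
proof -
  have "fst v \<bullet> fst v = snd v * snd v" using assms(1) unfolding lor_def by simp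
  then show ?thesis unfolding bdry_def ideal_of_def using assms(2)
    by (simp add: field_simps power2_eq_square)
qed

lemma lor_ideal_of: "lor (ideal_of v) b = lor v b / snd v"
  unfolding ideal_of_def by simp

lemma perp_construct:
  assumes aa: "lor a a = 1" and bb: "lor b b = 1" and k1: "lor a b > 1"
    and Ra: "hrefl a \<in> R" and Rb: "hrefl b \<in> R"
  shows "\<exists>\<mu>\<in>Pup R. lor \<mu> b > 0"
proof -
  define k where "k = lor a b"
  define m where "m = sqrt (k^2 - 1)"
  have k1': "k > 1" using k1 k_def by simp
  have m0: "m > 0" unfolding m_def using k1' by simp
  have "1 \<le> k * k" using mult_mono[of 1 k 1 k] k1' by simp
  then have mm: "m * m = k * k - 1" unfolding m_def by (simp add: power2_eq_square)
  have km: "m < k"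
  proof (rule ccontr)
    assume "\<not> m < k"
    then have "k * k \<le> m * m" using k1' by (intro mult_mono) auto
    then show False using mm by simp
  qed
  define \<tau> where "\<tau> = b - k *\<^sub>R a"
  have ba: "lor b a = k" by (simp add: k_def lor_sym)
  have tt: "lor \<tau> \<tau> = - (m * m)" unfolding \<tau>_def using aa bb ba k_def mm by (simp add: algebra_simps)
  have ta: "lor \<tau> a = 0" unfolding \<tau>_def using aa ba by simp
  have tb: "lor \<tau> b = - (m * m)" unfolding \<tau>_def using bb k_def mm by (simp add: algebra_simps)
  have st: "snd \<tau> \<noteq> 0"
  proof
    assume "snd \<tau> = 0"
    then have "lor \<tau> \<tau> \<ge> 0" by (simp add: lor_self)
    then show False using tt m0 by (smt (verit) mult_pos_pos)
  qed
  define \<sigma> :: real where "\<sigma> = (if snd \<tau> > 0 then 1 else -1)"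
  have ss: "\<sigma> * \<sigma> = 1" unfolding \<sigma>_def by auto
  have ss2: "\<sigma> * (\<sigma> * z) = z" for z using ss by (simp add: mult.assoc[symmetric])
  define x where "x = (\<sigma> / m) *\<^sub>R \<tau>"
  have xx: "lor x x = -1" unfolding x_def using tt m0 ss by (simp add: field_simps)
  have sx: "snd x > 0" unfolding x_def \<sigma>_def using m0 st by (auto simp: field_simps)
  have xH: "x \<in> Hn" unfolding Hn_def using xx sx by auto
  have xa: "lor x a = 0" unfolding x_def using ta by simp
  have ax: "lor a x = 0" using xa by (simp add: lor_sym)
  have xb: "lor x b = - \<sigma> * m" unfolding x_def using tb m0 by (simp add: field_simps)
  have ut: "unit_tangent x a" unfolding unit_tangent_def using xH xa aa by simp
  have a0: "a \<noteq> 0" "b \<noteq> 0" using aa bb by auto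
  have noint: False if "lor z z \<le> 0" "z \<noteq> 0" "lor z a = 0" "lor z b = 0" for z
  proof -
    have "lor z \<tau> = 0" unfolding \<tau>_def using that by simp
    moreover have "lor \<tau> \<tau> < 0" using tt m0 by simp
    ultimately show False using causal_orth_timelike[of z \<tau>] that by auto
  qed
  have up: "ultra_parallel (hrefl a) (hrefl b)"
    unfolding ultra_parallel_def hparallel_def hplane_hrefl[OF aa] hplane_hrefl[OF bb]
      ideal_hrefl[OF aa] ideal_hrefl[OF bb]
  proof (intro conjI)
    show "{x \<in> Hn. lor x a = 0} \<noteq> {x \<in> Hn. lor x b = 0}"
    proof
      assume h: "{x \<in> Hn. lor x a = 0} = {x \<in> Hn. lor x b = 0}"
      have "x \<in> {x \<in> Hn. lor x a = 0}" using xH xa by simp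
      then have "lor x b = 0" using h by blast
      moreover have "\<sigma> \<noteq> 0" using ss by auto
      ultimately show False using xb m0 by simp
    qed
    show "{x \<in> Hn. lor x a = 0} \<inter> {x \<in> Hn. lor x b = 0} = {}"
    proof (rule ccontr)
      assume "\<not> ?thesis"
      then obtain z where z: "z \<in> Hn" "lor z a = 0" "lor z b = 0" by auto
      have "lor z z = -1" using z(1) by (simp add: Hn_def)
      moreover have "z \<noteq> 0" using z(1) by (auto simp: Hn_def)
      ultimately show False using noint[of z] z by simp
    qed
    show "{x \<in> bdry. lor x a = 0} \<inter> {x \<in> bdry. lor x b = 0} = {}"
    proof (rule ccontr)
      assume "\<not> ?thesis"
      then obtain z where z: "z \<in> bdry" "lor z a = 0" "lor z b = 0" by auto
      have "lor z z = 0" using bdry_lor[OF z(1)] .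
      moreover have "z \<noteq> 0" using z(1) by (auto simp: bdry_def)
      ultimately show False using noint[of z] z by simp
    qed
  qed
  have pa: "perp_to (geod x a) (hrefl a)"
    unfolding perp_to_def
  proof (intro exI conjI allI impI)
    show "unit_tangent x a" by (rule ut)
    show "x \<in> hplane (hrefl a)" using hplane_hrefl[OF aa] xH xa by simp
    show "geod x a = geod x a" ..
    fix u assume "lor u x = 0 \<and> hrefl a u = u"
    then have "lor u a = 0" using hrefl_fix[OF a0(1)] by simp
    then show "lor a u = 0" by (simp add: lor_sym)
  qed
  define t0 where "t0 = \<sigma> * arcosh k"
  have ch: "cosh t0 = k" unfolding t0_def \<sigma>_def using k1' by auto
  have sh: "sinh t0 = \<sigma> * m" unfolding t0_def \<sigma>_def m_def using k1' by (auto simp: sinh_arcosh_real)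
  define y where "y = cosh t0 *\<^sub>R x + sinh t0 *\<^sub>R a"
  have vb: "sinh t0 *\<^sub>R x + cosh t0 *\<^sub>R a = b"
    unfolding sh ch x_def \<tau>_def using m0 ss by (simp add: field_simps)
  have yy: "lor y y = -1" unfolding y_def ch sh using xx xa aa lor_sym[of a x] ss mm 
    by (simp add: algebra_simps ss2)
  have yx: "lor y x = - k" unfolding y_def ch sh using xx ax by simp
  have sy: "snd y > 0" using future_of_neg2[of y x] yy yx xH k1' by simp
  have yH: "y \<in> Hn" unfolding Hn_def using yy sy by simp
  have yb: "lor y b = 0" unfolding y_def ch sh using xb k_def by (simp add: algebra_simps)
  have pb: "perp_to (geod x a) (hrefl b)"
    unfolding perp_to_def
  proof (intro exI conjI allI impI)
    show "unit_tangent y b" unfolding unit_tangent_def using yH yb bb by simp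
    show "y \<in> hplane (hrefl b)" using hplane_hrefl[OF bb] yH yb by simp
    show "geod x a = geod y b" using geod_shift[of x a t0] vb y_def by simp
    fix u assume "lor u y = 0 \<and> hrefl b u = u"
    then have "lor u b = 0" using hrefl_fix[OF a0(2)] by simp
    then show "lor b u = 0" by (simp add: lor_sym)
  qed
  define s where "s = snd (x + a)"
  have xal: "lor (x + a) (x + a) = 0" using xx xa aa lor_sym[of a x] by simp
  have xax: "lor (x + a) x < 0" using xx xa lor_sym[of a x] by simp
  have s0: "s > 0" unfolding s_def using future_of_neg2[OF _ xH xax] xal by simp
  define \<mu> where "\<mu> = ideal_of (x + a)"
  have mub: "\<mu> \<in> bdry" unfolding \<mu>_def using ideal_of_bdry[OF xal] s0 s_def by simp
  have "lor (x + a) b = k - \<sigma> * m" using xb k_def by simp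
  moreover have "k - \<sigma> * m > 0" using km m0 unfolding \<sigma>_def by auto
  ultimately have mupos: "lor \<mu> b > 0" unfolding \<mu>_def lor_ideal_of using s0 s_def by simp
  have "\<mu> \<in> geod_ends x a" unfolding geod_ends_def \<mu>_def by simp
  then have "\<mu> \<in> Pup R" unfolding Pup_def using mub Ra Rb up ut pa pb by blast
  then show ?thesis using mupos by blast
qed



lemma small_pos:
  fixes E :: "'a set"
  assumes "finite E"
  shows "\<exists>\<delta>>0. \<delta> < 1 \<and> (\<forall>f\<in>E. g f < 0 \<longrightarrow> g f + \<delta> * \<bar>h f\<bar> < (0::real))"
proof -
  define S where "S = insert (1/2) ((\<lambda>f. - g f / (\<bar>h f\<bar> + 1)) ` {f\<in>E. g f < 0})"
  have fS: "finite S" "S \<noteq> {}" unfolding S_def using assms by auto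
  have pS: "\<forall>s\<in>S. s > 0" unfolding S_def
    by (auto intro!: divide_neg_pos add_nonneg_pos[OF abs_ge_zero zero_less_one])
  define \<delta> where "\<delta> = Min S"
  have d0: "\<delta> > 0" unfolding \<delta>_def using fS pS by auto
  have d1: "\<delta> \<le> 1/2" unfolding \<delta>_def by (rule Min_le) (use fS in \<open>auto simp: S_def\<close>)
  have "g f + \<delta> * \<bar>h f\<bar> < 0" if f: "f \<in> E" "g f < 0" for f
  proof -
    have le: "\<delta> \<le> - g f / (\<bar>h f\<bar> + 1)" unfolding \<delta>_def using fS f by (auto simp: S_def)
    have p: "0 < \<bar>h f\<bar> + 1" using abs_ge_zero[of "h f"] by linarith
    have "\<delta> * (\<bar>h f\<bar> + 1) \<le> (- g f / (\<bar>h f\<bar> + 1)) * (\<bar>h f\<bar> + 1)"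
      using le p by (intro mult_right_mono) auto
    also have "\<dots> = - g f" using p by simp
    finally have "\<delta> * (\<bar>h f\<bar> + 1) \<le> - g f" .
    then show ?thesis using d0 by (simp add: algebra_simps)
  qed
  then show ?thesis using d0 d1 by (intro exI[of _ \<delta>]) auto
qed

definition q0 :: "'n::finite mvec" where "q0 = (0, 1)"

lemma lor_q0: "lor q0 b = - snd b"
  unfolding q0_def lor_def by simp

lemma K_compact: "compact {y::'n::finite mvec. lor y y = -1 \<and> 0 \<le> snd y \<and> snd y \<le> C}"
proof (rule compact_eq_bounded_closed[THEN iffD2], rule conjI)
  show "closed {y::'n::finite mvec. lor y y = -1 \<and> 0 \<le> snd y \<and> snd y \<le> C}"
    unfolding lor_def
    by (intro closed_Collect_conj closed_Collect_eq closed_Collect_le continuous_intros)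
  show "bounded {y::'n::finite mvec. lor y y = -1 \<and> 0 \<le> snd y \<and> snd y \<le> C}"
    unfolding bounded_iff
  proof (intro exI ballI)
    fix y :: "'n mvec" assume "y \<in> {y. lor y y = -1 \<and> 0 \<le> snd y \<and> snd y \<le> C}"
    then have y: "lor y y = -1" "0 \<le> snd y" "snd y \<le> C" by auto
    have e: "norm (fst y) ^ 2 = snd y ^ 2 - 1" using y(1) by (simp add: lor_self)
    have "snd y ^ 2 \<le> C ^ 2" using y power_mono by blast
    then have "norm (fst y) ^ 2 \<le> C ^ 2" using e by linarith
    then have "norm (fst y) \<le> \<bar>C\<bar>" using sq_le_abs by blast
    moreover have "norm y \<le> norm (fst y) + norm (snd y)" using norm_Pair_le[of "fst y" "snd y"] by simp
    ultimately show "norm y \<le> 2 * \<bar>C\<bar>" using y by auto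
  qed
qed

lemma K_Hn: "{y::'n::finite mvec. lor y y = -1 \<and> 0 \<le> snd y \<and> snd y \<le> C} \<subseteq> Hn"
proof
  fix y :: "'n mvec" assume "y \<in> {y. lor y y = -1 \<and> 0 \<le> snd y \<and> snd y \<le> C}"
  then have y: "lor y y = -1" "0 \<le> snd y" by auto
  have "snd y \<noteq> 0"
  proof
    assume "snd y = 0"
    then have "lor y y \<ge> 0" by (simp add: lor_self)
    then show False using y by simp
  qed
  then show "y \<in> Hn" unfolding Hn_def using y by auto
qed

lemma refl_fiber_finite: "finite {b::'n::finite mvec. lor b b = 1 \<and> hrefl b = f}"
proof (cases "{b::'n mvec. lor b b = 1 \<and> hrefl b = f} = {}")
  case True
  show ?thesis by (subst True) simp
next
  case False
  then obtain b0 where b0: "lor b0 b0 = 1" "hrefl b0 = f" by auto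
  have "{b. lor b b = 1 \<and> hrefl b = f} \<subseteq> {b0, - b0}"
  proof
    fix b assume "b \<in> {b. lor b b = 1 \<and> hrefl b = f}"
    then have "lor b b = 1" "hrefl b0 = hrefl b" using b0 by auto
    then show "b \<in> {b0, - b0}" using hrefl_eq[OF b0(1)] by auto
  qed
  then show ?thesis by (rule finite_subset) simp
qed

locale coxg = cox E for E :: "'n::finite mvec set" +
  assumes finE: "finite E" and neE: "E \<noteq> {}"
  and facets: "\<forall>e\<in>E. \<exists>x\<in>polytope E. lor x e = 0 \<and> (\<forall>f\<in>E - {e}. lor x f < 0)"
  and cone: "\<forall>v\<in>polycone E. v \<noteq> 0 \<longrightarrow> lor v v \<le> 0 \<and> snd v > 0"
  and disc: "discrete_action W"
  and sfd: "strict_fundamental_domain W (polytope E)"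
begin

lemma walls_locfin: "finite {b \<in> walls. \<bar>snd b\<bar> \<le> M}"
proof -
  define C where "C = sqrt (1 + M * M)"
  define K where "K = {y::'n mvec. lor y y = -1 \<and> 0 \<le> snd y \<and> snd y \<le> C}"
  have Kc: "compact K" "K \<subseteq> Hn" unfolding K_def by (rule K_compact, rule K_Hn)
  define F where "F = {w \<in> W. w ` K \<inter> K \<noteq> {}}"
  have fF: "finite F" unfolding F_def using disc Kc unfolding discrete_action_def by blast
  have sub: "{b \<in> walls. \<bar>snd b\<bar> \<le> M} \<subseteq> (\<Union>f\<in>F. {b. lor b b = 1 \<and> hrefl b = f})"
  proof
    fix b assume bm: "b \<in> {b \<in> walls. \<bar>snd b\<bar> \<le> M}"
    then have bw: "b \<in> walls" and bM: "\<bar>snd b\<bar> \<le> M" by auto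
    have bb: "lor b b = 1" using walls_unit[OF bw] .
    define c where "c = snd b"
    define r where "r = sqrt (1 + c * c)"
    have r0: "r > 0" unfolding r_def by (simp add: add_pos_nonneg)
    have rr: "r * r = 1 + c * c" unfolding r_def by (simp add: add_nonneg_nonneg)
    define z where "z = q0 + c *\<^sub>R b"
    define y where "y = (1 / r) *\<^sub>R z"
    have zz: "lor z z = - (1 + c * c)" unfolding z_def using bb
      by (simp add: lor_q0 lor_sym[of b q0] c_def algebra_simps) (simp add: q0_def lor_def)
    have cc: "1 + c * c > 0" by (simp add: add_pos_nonneg)
    have "lor y y = lor z z / (r * r)" unfolding y_def by (simp add: field_simps)
    also have "\<dots> = - (1 + c * c) / (1 + c * c)" using zz rr by simp
    also have "\<dots> = -1" using cc by (simp add: divide_eq_minus_1_iff)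
    finally have yy: "lor y y = -1" .
    have sz: "snd z = 1 + c * c" unfolding z_def q0_def c_def by simp
    have sy: "snd y = r" unfolding y_def using sz rr r0 by (simp add: field_simps)
    have "\<bar>c\<bar> * \<bar>c\<bar> \<le> M * M" using bM mult_mono[of "\<bar>c\<bar>" M "\<bar>c\<bar>" M] unfolding c_def by simp
    then have "c * c \<le> M * M" by (simp add: abs_mult_self_eq)
    then have "r \<le> C" unfolding r_def C_def by simp
    then have yK: "y \<in> K" unfolding K_def using yy sy r0 by simp
    have "lor z b = 0" unfolding z_def using bb by (simp add: lor_q0 c_def)
    then have "lor y b = 0" unfolding y_def by simp
    moreover have "b \<noteq> 0" using bb by auto
    ultimately have hb: "hrefl b y = y" using hrefl_fix[of b y] by simp
    have "hrefl b y \<in> hrefl b ` K" using yK by (rule imageI)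
    then have "y \<in> hrefl b ` K \<inter> K" using yK hb by simp
    then have "hrefl b ` K \<inter> K \<noteq> {}" by blast
    then have "hrefl b \<in> F" unfolding F_def using walls_refl[OF bw] by simp
    then show "b \<in> (\<Union>f\<in>F. {b. lor b b = 1 \<and> hrefl b = f})" using bb by blast
  qed
  show ?thesis
    by (rule finite_subset[OF sub]) (intro finite_UN_I fF refl_fiber_finite)
qed

end


lemma neg_snd:
  assumes oH: "q \<in> Hn" and bb: "lor b b = 1" and ob: "lor q b < 0"
  shows "snd b > - norm (fst q)"
proof (rule ccontr)
  assume "\<not> snd b > - norm (fst q)"
  then have s: "snd b \<le> - norm (fst q)" by simp
  have u2: "norm (fst b) ^ 2 = 1 + snd b ^ 2" using bb by (simp add: lor_self)
  have o2: "snd q ^ 2 = 1 + norm (fst q) ^ 2" using oH by (simp add: Hn_def lor_self)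
  have so: "norm (fst q) \<le> \<bar>snd b\<bar>" using s by simp
  then have so2: "norm (fst q) ^ 2 \<le> snd b ^ 2" using power_mono[OF so, of 2] by simp
  have "(norm (fst q) * norm (fst b)) ^ 2 = norm (fst q) ^ 2 + norm (fst q) ^ 2 * snd b ^ 2"
    by (simp add: power_mult_distrib u2 algebra_simps)
  also have "\<dots> \<le> snd b ^ 2 + norm (fst q) ^ 2 * snd b ^ 2" using so2 by simp
  also have "\<dots> = (snd q * \<bar>snd b\<bar>) ^ 2" by (simp add: power_mult_distrib o2 algebra_simps)
  finally have "(norm (fst q) * norm (fst b)) ^ 2 \<le> (snd q * \<bar>snd b\<bar>) ^ 2" .
  moreover have "snd q > 0" using Hn_norm[OF oH] norm_ge_zero[of "fst q"] by linarith
  then have "0 \<le> snd q * \<bar>snd b\<bar>" by simp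
  ultimately have m: "norm (fst q) * norm (fst b) \<le> snd q * \<bar>snd b\<bar>" by (rule power2_le_imp_le)
  have cs: "- (norm (fst q) * norm (fst b)) \<le> fst q \<bullet> fst b"
    using Cauchy_Schwarz_ineq2[of "fst q" "fst b"] by linarith
  have "snd b \<le> 0" using s norm_ge_zero[of "fst q"] by linarith
  then have "- (snd q * snd b) = snd q * \<bar>snd b\<bar>" by simp
  then have "lor q b \<ge> 0" unfolding lor_def using m cs by linarith
  then show False using ob by simp
qed

context coxg begin

lemma int_point: "\<exists>q\<in>Hn. \<forall>e\<in>E. lor q e < 0"
proof -
  obtain e1 where e1: "e1 \<in> E" using neE by blast
  have "\<exists>e2\<in>E. e2 \<noteq> e1"
  proof (rule ccontr)
    assume "\<not> ?thesis"
    then have Ee: "E = {e1}" using e1 by blast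
    have u: "lor e1 e1 = 1" using unitE[OF e1] .
    have "- e1 \<in> polycone E" unfolding polycone_def Ee using u by simp
    moreover have "- e1 \<noteq> 0" using unit_nz[OF u] by simp
    ultimately have "lor (- e1) (- e1) \<le> 0" using cone by blast
    then show False using u by simp
  qed
  then obtain e2 where e2: "e2 \<in> E" "e2 \<noteq> e1" by blast
  obtain x1 where x1: "x1 \<in> polytope E" "\<forall>f\<in>E - {e1}. lor x1 f < 0" using facets e1 by blast
  obtain x2 where x2: "x2 \<in> polytope E" "\<forall>f\<in>E - {e2}. lor x2 f < 0" using facets e2 by blast
  have x1H: "x1 \<in> Hn" "\<forall>f\<in>E. lor x1 f \<le> 0" using x1 unfolding polytope_def polycone_def by auto
  have x2H: "x2 \<in> Hn" "\<forall>f\<in>E. lor x2 f \<le> 0" using x2 unfolding polytope_def polycone_def by auto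
  define p where "p = x1 + x2"
  have pf: "lor p f < 0" if "f \<in> E" for f
  proof (cases "f = e1")
    case True
    then have "lor x2 f < 0" using x2 e2 that by auto
    then show ?thesis unfolding p_def using x1H that by (simp add: add_nonpos_neg)
  next
    case False
    then have "lor x1 f < 0" using x1 that by auto
    then show ?thesis unfolding p_def using x2H that by (simp add: add_neg_nonpos)
  qed
  have "lor x1 x2 < 0" using Hn_Hn_neg[OF x1H(1) x2H(1)] .
  moreover have "lor x1 x1 = -1" "lor x2 x2 = -1" using x1H x2H by (auto simp: Hn_def)
  ultimately have pp: "lor p p < 0" unfolding p_def by (simp add: lor_sym[of x2 x1])
  have sp: "snd p > 0" unfolding p_def using x1H x2H by (auto simp: Hn_def)
  define t where "t = sqrt (- lor p p)"
  have t0: "t > 0" unfolding t_def using pp by simp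
  have tt: "t * t = - lor p p" unfolding t_def using pp by simp
  define q where "q = (1 / t) *\<^sub>R p"
  have "lor q q = lor p p / (t * t)" unfolding q_def by (simp add: field_simps)
  then have "lor q q = -1" using tt pp by simp
  moreover have "snd q > 0" unfolding q_def using sp t0 by simp
  ultimately have "q \<in> Hn" unfolding Hn_def by simp
  moreover have "\<forall>e\<in>E. lor q e < 0" unfolding q_def using pf t0 by (simp add: divide_neg_pos)
  ultimately show ?thesis by blast
qed

lemma off_walls:
  assumes qH: "q \<in> Hn" and qE: "\<forall>e\<in>E. lor q e < 0" and bw: "b \<in> walls"
  shows "lor q b \<noteq> 0"
proof
  assume qb: "lor q b = 0"
  have bb: "lor b b = 1" using walls_unit[OF bw] .
  obtain \<delta> where d: "\<delta> > 0" "\<delta> < 1" "\<forall>f\<in>E. lor q f < 0 \<longrightarrow> lor q f + \<delta> * \<bar>lor b f\<bar> < 0"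
    using small_pos[OF finE, of "\<lambda>f. lor q f" "\<lambda>f. lor b f"] by blast
  define t where "t = sqrt (1 - \<delta> * \<delta>)"
  have "\<delta> * \<delta> < 1 * 1" using d by (intro mult_strict_mono) auto
  then have dd: "\<delta> * \<delta> < 1" by simp
  have t0: "t > 0" unfolding t_def using dd by simp
  have tt: "t * t = 1 - \<delta> * \<delta>" unfolding t_def using dd by simp
  have qq: "lor q q = -1" using qH by (simp add: Hn_def)
  have bq: "lor b q = 0" using qb by (simp add: lor_sym)
  have mem: "(1 / t) *\<^sub>R (q + \<sigma> *\<^sub>R b) \<in> polytope E" if s: "\<sigma> = \<delta> \<or> \<sigma> = - \<delta>" for \<sigma>
  proof -
    define v where "v = (1 / t) *\<^sub>R (q + \<sigma> *\<^sub>R b)"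
    have ss: "\<sigma> * \<sigma> = \<delta> * \<delta>" using s by auto
    have e1: "lor (q + \<sigma> *\<^sub>R b) (q + \<sigma> *\<^sub>R b) = -1 + \<delta> * \<delta>" using qq qb bq bb ss by simp
    have "lor v v = (1/t) * ((1/t) * lor (q + \<sigma> *\<^sub>R b) (q + \<sigma> *\<^sub>R b))"
      unfolding v_def by (simp only: lor_scale_left lor_scale_right)
    also have "\<dots> = (-1 + \<delta> * \<delta>) / (t * t)" using e1 by simp
    also have "\<dots> = -1" using tt dd t0 by (simp add: divide_eq_minus_1_iff)
    finally have vv: "lor v v = -1" .
    have "lor v q = (1 / t) * (-1)" unfolding v_def using qq bq by simp
    then have "lor v q < 0" using t0 by simp
    then have "snd v > 0" using future_of_neg2[of v q] vv qH by simp
    then have vH: "v \<in> Hn" unfolding Hn_def using vv by simp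
    have "lor v f \<le> 0" if f: "f \<in> E" for f
    proof -
      have "lor (q + \<sigma> *\<^sub>R b) f = lor q f + \<sigma> * lor b f" by simp
      also have "\<dots> \<le> lor q f + \<delta> * \<bar>lor b f\<bar>"
      proof -
        have "\<sigma> * lor b f \<le> \<bar>\<sigma> * lor b f\<bar>" by (rule abs_ge_self)
        also have "\<bar>\<sigma> * lor b f\<bar> = \<delta> * \<bar>lor b f\<bar>" using s d(1) by (auto simp: abs_mult)
        finally show ?thesis by simp
      qed
      also have "\<dots> < 0" using d(3) qE f by auto
      finally have "lor (q + \<sigma> *\<^sub>R b) f < 0" .
      then show ?thesis unfolding v_def using t0 by (simp add: divide_neg_pos less_imp_le)
    qed
    then show ?thesis using vH unfolding v_def polytope_def polycone_def by auto
  qed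
  define xp where "xp = (1 / t) *\<^sub>R (q + \<delta> *\<^sub>R b)"
  define xm where "xm = (1 / t) *\<^sub>R (q + (- \<delta>) *\<^sub>R b)"
  have xpP: "xp \<in> polytope E" unfolding xp_def using mem by blast
  have xmP: "xm \<in> polytope E" unfolding xm_def using mem by blast
  have xmH: "xm \<in> Hn" using xmP unfolding polytope_def by auto
  have lxb: "lor xp b = \<delta> / t" unfolding xp_def using qb bb by simp
  have "hrefl b xp = xp - (2 * (\<delta> / t)) *\<^sub>R b" unfolding hrefl_def using lxb by simp
  also have "\<dots> = xm" unfolding xp_def xm_def
    by (simp add: prod_eq_iff vec_eq_iff field_simps)
  finally have r: "hrefl b xp = xm" .
  have uniq: "\<exists>!p. p \<in> polytope E \<and> (\<exists>w\<in>W. w p = xm)" using sfd xmH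
    unfolding strict_fundamental_domain_def by blast
  have "id \<in> W" by (rule gen_group.gen_id)
  then have c1: "xm \<in> polytope E \<and> (\<exists>w\<in>W. w xm = xm)" using xmP by (intro conjI bexI[of _ id]) auto
  have c2: "xp \<in> polytope E \<and> (\<exists>w\<in>W. w xp = xm)" using xpP r walls_refl[OF bw] by blast
  have "xp = xm" using uniq c1 c2 by blast
  then have "t *\<^sub>R xp = t *\<^sub>R xm" by simp
  then have "q + \<delta> *\<^sub>R b = q + (- \<delta>) *\<^sub>R b" unfolding xp_def xm_def using t0 by simp
  then have "lor (q + \<delta> *\<^sub>R b) b = lor (q + (- \<delta>) *\<^sub>R b) b" by simp
  then have "\<delta> = - \<delta>" using bb by simp
  then show False using d(1) by simp
qed

end


context coxg begin

lemma cusp_finite: "finite (polycone E \<inter> bdry)"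
proof -
  define act where "act c = {e \<in> E. lor c e = 0}" for c
  have inj: "inj_on act (polycone E \<inter> bdry)"
  proof (rule inj_onI)
    fix c c' assume c: "c \<in> polycone E \<inter> bdry" and c': "c' \<in> polycone E \<inter> bdry" and a: "act c = act c'"
    have cp: "\<forall>f\<in>E. lor c f \<le> 0" "\<forall>f\<in>E. lor c' f \<le> 0" using c c' unfolding polycone_def by auto
    obtain \<delta> where d: "\<delta> > 0" "\<delta> < 1" "\<forall>f\<in>E. lor c f < 0 \<longrightarrow> lor c f + \<delta> * \<bar>lor c' f\<bar> < 0"
      using small_pos[OF finE, of "\<lambda>f. lor c f" "\<lambda>f. lor c' f"] by blast
    define d' where "d' = c - \<delta> *\<^sub>R c'"
    have "lor d' f \<le> 0" if f: "f \<in> E" for f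
    proof (cases "lor c f < 0")
      case True
      have h2: "- (\<delta> * lor c' f) \<le> \<delta> * \<bar>lor c' f\<bar>" using d(1) by (simp add: abs_if)
      have h1: "lor c f + \<delta> * \<bar>lor c' f\<bar> < 0" using d(3) f True by blast
      have "lor d' f = lor c f - \<delta> * lor c' f" unfolding d'_def by simp
      then show ?thesis using h1 h2 by linarith
    next
      case False
      then have "lor c f = 0" using cp f by force
      then have "f \<in> act c'" using a f unfolding act_def by auto
      then have "lor c' f = 0" unfolding act_def by simp
      then show ?thesis unfolding d'_def using \<open>lor c f = 0\<close> by simp
    qed
    then have dP: "d' \<in> polycone E" unfolding polycone_def by blast
    have sc: "snd c = 1" "snd c' = 1" using c c' by (auto simp: bdry_def)
    have "snd d' = 1 - \<delta>" unfolding d'_def using sc by simp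
    then have "d' \<noteq> 0" using d by auto
    then have "lor d' d' \<le> 0" using cone dP by blast
    moreover have "lor c c = 0" "lor c' c' = 0" using bdry_lor[OF IntD2[OF c]] bdry_lor[OF IntD2[OF c']] by auto
    ultimately have "- 2 * \<delta> * lor c c' \<le> 0" unfolding d'_def by (simp add: lor_sym[of c' c] algebra_simps)
    then have "lor c c' \<ge> 0" using d(1) by (simp add: mult_le_0_iff zero_le_mult_iff)
    then have dot: "fst c \<bullet> fst c' \<ge> 1" unfolding lor_def using sc by simp
    have n: "fst c \<bullet> fst c = 1" "fst c' \<bullet> fst c' = 1" using c c' by (auto simp: bdry_def)
    have "(fst c - fst c') \<bullet> (fst c - fst c') = 2 - 2 * (fst c \<bullet> fst c')"
      using n by (simp add: inner_diff_left inner_diff_right inner_commute)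
    then have "(fst c - fst c') \<bullet> (fst c - fst c') \<le> 0" using dot by simp
    then have "(fst c - fst c') \<bullet> (fst c - fst c') = 0" using inner_ge_zero[of "fst c - fst c'"] by linarith
    then have "fst c - fst c' = 0" by simp
    then have "fst c = fst c'" by simp
    then show "c = c'" using sc by (simp add: prod_eq_iff)
  qed
  have "act ` (polycone E \<inter> bdry) \<subseteq> Pow E" unfolding act_def by auto
  then have "finite (act ` (polycone E \<inter> bdry))" using finE by (rule finite_subset[OF _ finite_Pow_iff[THEN iffD2]])
  then show ?thesis using inj by (rule finite_imageD)
qed

lemma cusp_or_walls:
  assumes qH: "q \<in> Hn" and qE: "\<forall>e\<in>E. lor q e < 0" and \<xi>b: "\<xi>0 \<in> bdry"
    and hM: "\<forall>b\<in>walls. lor \<xi>0 b > 0 \<longrightarrow> snd b \<le> M"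
  shows "\<xi>0 \<in> (\<lambda>(w, c). ideal_of (w c)) ` (W \<times> (polycone E \<inter> bdry))"
proof -
  have off: "lor q b \<noteq> 0" if "b \<in> walls" for b using off_walls[OF qH qE that] .
  define G where "G = {b \<in> walls. lor q b < 0 \<and> lor \<xi>0 b > 0}"
  have "G \<subseteq> {b \<in> walls. \<bar>snd b\<bar> \<le> max M (norm (fst q))}"
  proof
    fix b assume "b \<in> G"
    then have b: "b \<in> walls" "lor q b < 0" "lor \<xi>0 b > 0" unfolding G_def by auto
    have "snd b > - norm (fst q)" using neg_snd[OF qH walls_unit[OF b(1)] b(2)] .
    moreover have "snd b \<le> M" using hM b by blast
    ultimately show "b \<in> {b \<in> walls. \<bar>snd b\<bar> \<le> max M (norm (fst q))}" using b(1) by auto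
  qed
  then have fG: "finite G" using walls_locfin by (rule finite_subset)
  define \<beta> where "\<beta> = 1 + (\<Sum>b\<in>G. (- lor q b) / lor \<xi>0 b)"
  have termpos: "\<forall>b\<in>G. 0 \<le> (- lor q b) / lor \<xi>0 b"
  proof
    fix b assume "b \<in> G"
    then have "- lor q b \<ge> 0" "lor \<xi>0 b > 0" unfolding G_def by auto
    then show "0 \<le> (- lor q b) / lor \<xi>0 b" by (rule divide_nonneg_pos)
  qed
  have \<beta>pos: "\<beta> > 0" unfolding \<beta>_def using sum_nonneg[of G] termpos by (smt (verit) sum_nonneg)
  have Gpos: "lor q b + \<beta> * lor \<xi>0 b > 0" if b: "b \<in> G" for b
  proof -
    have lb: "lor \<xi>0 b > 0" using b unfolding G_def by auto
    have "(- lor q b) / lor \<xi>0 b \<le> (\<Sum>b\<in>G. (- lor q b) / lor \<xi>0 b)"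
      using member_le_sum[of b G "\<lambda>b. (- lor q b) / lor \<xi>0 b"] fG b termpos by blast
    then have h: "(- lor q b) / lor \<xi>0 b < \<beta>" unfolding \<beta>_def by linarith
    then have "- lor q b < \<beta> * lor \<xi>0 b" using pos_divide_less_eq[OF lb] by blast
    then show ?thesis by simp
  qed
  define y where "y = q + \<beta> *\<^sub>R \<xi>0"
  have q\<xi>: "lor q \<xi>0 < 0" using Hn_bdry_neg[OF qH \<xi>b] lor_sym by metis
  have \<xi>\<xi>: "lor \<xi>0 \<xi>0 = 0" using bdry_lor[OF \<xi>b] .
  have qq: "lor q q = -1" using qH by (simp add: Hn_def)
  have yy: "lor y y = -1 + 2 * \<beta> * lor q \<xi>0" unfolding y_def using qq \<xi>\<xi> by (simp add: lor_sym[of \<xi>0 q] algebra_simps)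
  then have yy0: "lor y y < 0" using mult_pos_neg[OF \<beta>pos q\<xi>] by linarith
  have "lor y q = -1 + \<beta> * lor q \<xi>0" unfolding y_def using qq by (simp add: lor_sym[of \<xi>0 q])
  then have yq: "lor y q < 0" using mult_pos_neg[OF \<beta>pos q\<xi>] by linarith
  define t where "t = sqrt (- lor y y)"
  have t0: "t > 0" unfolding t_def using yy0 by simp
  have tt: "t * t = - lor y y" unfolding t_def using yy0 by simp
  define x where "x = (1 / t) *\<^sub>R y"
  have sy: "snd y > 0" using future_of_neg[OF yy0 qH yq] .
  have "lor x x = lor y y / (t * t)" unfolding x_def by (simp add: field_simps)
  then have "lor x x = -1" using tt yy0 by simp
  moreover have "snd x > 0" unfolding x_def using sy t0 by simp
  ultimately have xH: "x \<in> Hn" unfolding Hn_def by simp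
  then obtain p w where pw: "p \<in> polytope E" "w \<in> W" "w p = x"
    using sfd unfolding strict_fundamental_domain_def by blast
  have wle: "lor \<xi>0 (w e) \<le> 0" if e: "e \<in> E" for e
  proof (rule ccontr)
    assume "\<not> ?thesis"
    then have pos: "lor \<xi>0 (w e) > 0" by simp
    define b where "b = w e"
    have bw: "b \<in> walls" unfolding walls_def b_def using pw(2) e by blast
    have "lor x b = lor p e" unfolding b_def using W_lor[OF pw(2)] pw(3) by metis
    also have "\<dots> \<le> 0" using pw(1) e unfolding polytope_def polycone_def by auto
    finally have xb: "lor x b \<le> 0" .
    have "lor y b > 0"
    proof (cases "lor q b < 0")
      case True
      then have "b \<in> G" unfolding G_def using bw pos b_def by simp
      then show ?thesis using Gpos unfolding y_def by simp
    next
      case False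
      then have "lor q b > 0" using off[OF bw] by simp
      then show ?thesis unfolding y_def using pos \<beta>pos b_def by (simp add: add_pos_pos)
    qed
    then have "lor x b > 0" unfolding x_def using t0 by simp
    then show False using xb by simp
  qed
  define c where "c = inv w \<xi>0"
  have wc: "w c = \<xi>0" unfolding c_def using W_inv(2)[OF pw(2)] .
  have cP: "c \<in> polycone E" unfolding polycone_def
  proof (intro CollectI ballI)
    fix e assume "e \<in> E"
    have "lor c e = lor (w c) (w e)" using W_lor[OF pw(2)] by simp
    then show "lor c e \<le> 0" using wle[OF \<open>e \<in> E\<close>] wc by simp
  qed
  have cc: "lor c c = 0" using W_lor[OF pw(2), of c c] wc \<xi>\<xi> by simp
  have lw: "linear w" using W_linear[OF pw(2)] .
  have "c \<noteq> 0"
  proof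
    assume "c = 0"
    then have "\<xi>0 = 0" using wc linear_0[OF lw] by simp
    then show False using \<xi>b by (simp add: bdry_def)
  qed
  then have sc: "snd c > 0" using cone cP by blast
  define ch where "ch = (1 / snd c) *\<^sub>R c"
  have chb: "ch \<in> bdry" unfolding ch_def using ideal_of_bdry[OF cc sc] by (simp add: ideal_of_def)
  have chP: "ch \<in> polycone E" unfolding polycone_def
  proof (intro CollectI ballI)
    fix e assume "e \<in> E"
    then have "lor c e \<le> 0" using cP unfolding polycone_def by blast
    then show "lor ch e \<le> 0" unfolding ch_def using sc by (simp add: divide_nonpos_pos)
  qed
  have wch: "w ch = (1 / snd c) *\<^sub>R \<xi>0" unfolding ch_def using linear_cmul[OF lw] wc by simp
  have "ideal_of (w ch) = \<xi>0" unfolding ideal_of_def wch using sc \<xi>b by (simp add: bdry_def)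
  then show ?thesis using pw(2) chb chP by (intro image_eqI[of _ _ "(w, ch)"]) auto
qed

end


lemma near_generic:
  fixes \<xi> :: "'n::finite mvec"
  assumes card: "CARD('n) \<ge> 2" and \<xi>b: "\<xi> \<in> bdry" and e0: "\<epsilon> > 0" and cC: "countable C"
  shows "\<exists>\<xi>0\<in>bdry. dist \<xi>0 \<xi> < \<epsilon> \<and> \<xi>0 \<notin> C"
proof -
  define z where "z = fst \<xi>"
  have zz: "z \<bullet> z = 1" and s1: "snd \<xi> = 1" using \<xi>b unfolding z_def bdry_def by auto
  have "2 \<le> DIM(real^'n)" using card by simp
  then obtain w0 where w0: "w0 \<noteq> 0" "orthogonal z w0" using orthogonal_to_vector_exists by blast
  define w where "w = (1 / norm w0) *\<^sub>R w0"
  have ww: "w \<bullet> w = 1" unfolding w_def using w0(1) by (simp add: dot_square_norm power2_eq_square)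
  have zw: "z \<bullet> w = 0" unfolding w_def using w0(2) by (simp add: orthogonal_def)
  define f where "f \<theta> = (cos \<theta> *\<^sub>R z + sin \<theta> *\<^sub>R w, 1::real)" for \<theta>
  have f0: "f 0 = \<xi>" unfolding f_def z_def using s1 by (simp add: prod_eq_iff)
  have "continuous (at 0) f" unfolding f_def by (intro continuous_intros)
  then obtain d where d: "d > 0" "\<forall>\<theta>. dist \<theta> 0 < d \<longrightarrow> dist (f \<theta>) (f 0) < \<epsilon>"
    using e0 unfolding continuous_at_eps_delta by blast
  define d' where "d' = min d 1"
  have d'0: "d' > 0" unfolding d'_def using d by simp
  have "inj_on f {0<..<d'}"
  proof (rule inj_onI)
    fix a b assume a: "a \<in> {0<..<d'}" and b: "b \<in> {0<..<d'}" and e: "f a = f b"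
    have "fst (f a) \<bullet> w = sin a" "fst (f b) \<bullet> w = sin b" unfolding f_def using ww zw
      by (simp_all add: inner_add_left)
    then have "sin a = sin b" using e by simp
    moreover have "pi / 2 \<ge> 1" using pi_ge_two by simp
    moreover have "d' \<le> 1" unfolding d'_def by simp
    moreover have "0 < a" "a < d'" "0 < b" "b < d'" using a b by auto
    ultimately have ha: "- (pi/2) \<le> a" "a \<le> pi/2" "- (pi/2) \<le> b" "b \<le> pi/2" by linarith+
    have "a = arcsin (sin a)" using arcsin_sin[OF ha(1,2)] by simp
    also have "\<dots> = arcsin (sin b)" using \<open>sin a = sin b\<close> by simp
    also have "\<dots> = b" using arcsin_sin[OF ha(3,4)] by simp
    finally show "a = b" .
  qed
  moreover have "uncountable {0<..<d'}" using d'0 by (simp add: uncountable_open_interval)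
  ultimately have "uncountable (f ` {0<..<d'})" using countable_image_inj_on by blast
  then have "\<not> f ` {0<..<d'} \<subseteq> C" using cC countable_subset by blast
  then obtain \<theta> where th: "\<theta> \<in> {0<..<d'}" "f \<theta> \<notin> C" by blast
  have "fst (f \<theta>) \<bullet> fst (f \<theta>) = (cos \<theta>)^2 + (sin \<theta>)^2" unfolding f_def using zz ww zw
    by (simp add: inner_add_left inner_add_right inner_commute power2_eq_square)
  then have "f \<theta> \<in> bdry" unfolding bdry_def f_def by simp
  moreover have "dist (f \<theta>) \<xi> < \<epsilon>" using d th f0 unfolding d'_def by auto
  ultimately show ?thesis using th by blast
qed

lemma est1:
  assumes \<xi>b: "\<xi> \<in> bdry" and pos: "lor \<xi> b > 0" and bb: "lor b b = 1" and s0: "snd b > 0"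
  shows "norm (fst b - snd b *\<^sub>R fst \<xi>) < 1"
proof -
  define u where "u = fst b"
  define s where "s = snd b"
  define z where "z = fst \<xi>"
  have zz: "z \<bullet> z = 1" and s1: "snd \<xi> = 1" using \<xi>b unfolding z_def bdry_def by auto
  have uu: "u \<bullet> u = 1 + s * s" using bb unfolding lor_def u_def s_def by simp
  have uz: "u \<bullet> z > s" using pos s1 unfolding lor_def u_def s_def z_def by (simp add: inner_commute)
  have "(u - s *\<^sub>R z) \<bullet> (u - s *\<^sub>R z) = u \<bullet> u - 2 * s * (u \<bullet> z) + s * s * (z \<bullet> z)"
    by (simp add: inner_diff_left inner_diff_right inner_commute algebra_simps)
  also have "\<dots> = 1 + 2 * s * s - 2 * s * (u \<bullet> z)" using uu zz by simp
  also have "\<dots> < 1"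
  proof -
    have "s * s < s * (u \<bullet> z)" using uz s0 unfolding s_def by simp
    then show ?thesis by simp
  qed
  finally have "norm (u - s *\<^sub>R z) ^ 2 < 1" by (simp add: dot_square_norm)
  then have "norm (u - s *\<^sub>R z) < 1" by (simp add: power_less_one_iff abs_square_less_1)
  then show ?thesis unfolding u_def s_def z_def .
qed

context coxg begin

lemma dense_Pup:
  assumes card: "CARD('n) \<ge> 2" and \<xi>b: "\<xi> \<in> bdry" and e0: "\<epsilon> > 0"
  shows "\<exists>\<mu>\<in>Pup (reflections_of W (hrefl ` E)). dist \<mu> \<xi> < \<epsilon>"
proof -
  obtain q where qH: "q \<in> Hn" and qE: "\<forall>e\<in>E. lor q e < 0" using int_point by blast
  define Cu where "Cu = (\<lambda>(w, c). ideal_of (w c)) ` (W \<times> (polycone E \<inter> bdry))"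
  have "countable (W \<times> (polycone E \<inter> bdry))"
    using W_countable[OF finE] cusp_finite by (simp add: countable_finite)
  then have cC: "countable Cu" unfolding Cu_def by simp
  obtain \<xi>0 where \<xi>0: "\<xi>0 \<in> bdry" "dist \<xi>0 \<xi> < \<epsilon> / 2" "\<xi>0 \<notin> Cu"
    using near_generic[OF card \<xi>b _ cC, of "\<epsilon> / 2"] e0 by auto
  have big: "\<exists>b\<in>walls. lor \<xi>0 b > 0 \<and> snd b > M" for M
  proof (rule ccontr)
    assume "\<not> ?thesis"
    then have "\<forall>b\<in>walls. lor \<xi>0 b > 0 \<longrightarrow> snd b \<le> M" by auto
    then have "\<xi>0 \<in> Cu" unfolding Cu_def using cusp_or_walls[OF qH qE \<xi>0(1)] by blast
    then show False using \<xi>0(3) by blast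
  qed
  obtain a where a: "a \<in> walls" "lor \<xi>0 a > 0" "snd a > 0" using big[of 0] by blast
  define \<delta> where "\<delta> = lor \<xi>0 a"
  define A where "A = norm (fst a)"
  obtain b where b: "b \<in> walls" "lor \<xi>0 b > 0" "snd b > max 1 (max ((1 + A) / \<delta>) (4 / \<epsilon>))"
    using big by blast
  define s where "s = snd b"
  have s1: "s > 1" and sA: "s > (1 + A) / \<delta>" and se: "s > 4 / \<epsilon>" using b(3) unfolding s_def by auto
  have d0: "\<delta> > 0" using a(2) \<delta>_def by simp
  have aa: "lor a a = 1" and bb: "lor b b = 1" using walls_unit a(1) b(1) by auto
  have z1: "snd \<xi>0 = 1" using \<xi>0(1) by (simp add: bdry_def)
  have eb: "norm (fst b - s *\<^sub>R fst \<xi>0) < 1" using est1[OF \<xi>0(1) b(2) bb] s1 unfolding s_def by simp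
  have "lor a b - s * \<delta> = fst a \<bullet> (fst b - s *\<^sub>R fst \<xi>0)"
    unfolding \<delta>_def lor_def s_def using z1 by (simp add: inner_diff_right inner_commute algebra_simps)
  moreover have "fst a \<bullet> (fst b - s *\<^sub>R fst \<xi>0) \<ge> - A"
  proof -
    have "\<bar>fst a \<bullet> (fst b - s *\<^sub>R fst \<xi>0)\<bar> \<le> A * norm (fst b - s *\<^sub>R fst \<xi>0)"
      unfolding A_def by (rule Cauchy_Schwarz_ineq2)
    also have "\<dots> \<le> A * 1" using eb unfolding A_def by (intro mult_left_mono) auto
    finally show ?thesis by linarith
  qed
  moreover have "s * \<delta> > 1 + A" using sA d0 by (simp add: pos_divide_less_eq)
  ultimately have k1: "lor a b > 1" by linarith
  obtain \<mu> where mu: "\<mu> \<in> Pup (reflections_of W (hrefl ` E))" "lor \<mu> b > 0"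
    using perp_construct[OF aa bb k1 walls_R[OF a(1)] walls_R[OF b(1)]] by blast
  have mub: "\<mu> \<in> bdry" using mu(1) unfolding Pup_def by auto
  have e2: "norm (fst b - s *\<^sub>R fst \<mu>) < 1" using est1[OF mub mu(2) bb] s1 unfolding s_def by simp
  have "s *\<^sub>R (fst \<mu> - fst \<xi>0) = (fst b - s *\<^sub>R fst \<xi>0) - (fst b - s *\<^sub>R fst \<mu>)"
    by (simp add: algebra_simps)
  then have "norm (s *\<^sub>R (fst \<mu> - fst \<xi>0)) \<le> norm (fst b - s *\<^sub>R fst \<xi>0) + norm (fst b - s *\<^sub>R fst \<mu>)"
    by (metis norm_triangle_ineq4)
  then have "s * norm (fst \<mu> - fst \<xi>0) < 2" using eb e2 s1 by simp
  moreover have "2 < s * (\<epsilon> / 2)" using se e0 by (simp add: field_simps)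
  ultimately have "norm (fst \<mu> - fst \<xi>0) < \<epsilon> / 2" using s1 by (smt (verit) mult_le_cancel_left_pos)
  moreover have "dist \<mu> \<xi>0 = norm (fst \<mu> - fst \<xi>0)"
    using mub \<xi>0(1) by (simp add: dist_norm norm_prod_def bdry_def)
  ultimately have "dist \<mu> \<xi>0 < \<epsilon> / 2" by simp
  then have "dist \<mu> \<xi> < \<epsilon>" using \<xi>0(2) dist_triangle[of \<mu> \<xi> \<xi>0] by simp
  then show ?thesis using mu(1) by blast
qed

end

theorem mainTheorem11:
  fixes E :: "('n::finite) mvec set"
  assumes "CARD('n) \<ge> 2"
    and "coxeter_polytope E"
    and "discrete_action (gen_group (hrefl ` E))"
    and "strict_fundamental_domain (gen_group (hrefl ` E)) (polytope E)"
  shows "bdry \<subseteq> closure (Ip (reflections_of (gen_group (hrefl ` E)) (hrefl ` E))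
                          \<union> Pup (reflections_of (gen_group (hrefl ` E)) (hrefl ` E)))"
proof -
  have cp: "finite E" "E \<noteq> {}" "\<forall>e\<in>E. lor e e = 1"
    "\<forall>e\<in>E. \<exists>x\<in>polytope E. lor x e = 0 \<and> (\<forall>f\<in>E - {e}. lor x f < 0)"
    "\<forall>v\<in>polycone E. v \<noteq> 0 \<longrightarrow> lor v v \<le> 0 \<and> snd v > 0"
    using assms(2) unfolding coxeter_polytope_def by blast+
  interpret coxg E
    by unfold_locales (use cp assms(3,4) in blast)+
  show ?thesis
  proof
    fix \<xi> :: "'n mvec" assume \<xi>b: "\<xi> \<in> bdry"
    show "\<xi> \<in> closure (Ip (reflections_of W (hrefl ` E)) \<union> Pup (reflections_of W (hrefl ` E)))"
      unfolding closure_approachable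
    proof (intro allI impI)
      fix e :: real assume "e > 0"
      then obtain \<mu> where "\<mu> \<in> Pup (reflections_of W (hrefl ` E))" "dist \<mu> \<xi> < e"
        using dense_Pup[OF assms(1) \<xi>b] by blast
      then show "\<exists>y\<in>Ip (reflections_of W (hrefl ` E)) \<union> Pup (reflections_of W (hrefl ` E)). dist y \<xi> < e"
        by blast
    qed
  qed
qed

end
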